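(* Let $(X,\Sigma)$ be a measurable space and $\mathscr{A}=\{\mathsf{A}(\cdot|E)\colon E\in\Sigma\}$ a family of conditional aggregation operators (with paving $\Sigma$). Consider the property (P): $\boldsymbol{\mu}_{\mathscr{A}}(f,t)=\mu_t(\{x\in X\colon f(x)\ge t\})$ for every $t>0$, every $f\in\mathbf{F}\setminus\{0_X\}$ and every family $\boldsymbol{\mu}=(\mu_t)_{t\ge0}$ of monotone measures on $\Sigma$. (a) If $\Sigma=\{\emptyset,X\}$, then (P) holds if and only if $\mathsf{A}(\cdot|X)$ is idempotent, i.e. $\mathsf{A}(b\mathbf{1}_X|X)=b$ for all $b\in(0,\infty)$. (b) If $\Sigma\ne\{\emptyset,X\}$, then (P) holds if and only if $\mathsf{A}(f|E)=\inf_{x\in E}f(x)$ for all $f\in\mathbf{F}$ and all $E\in\Sigma\setminus\{\emptyset\}$.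
   Context: $0_X$ is the zero function on $X$. $\Sigma^0=\Sigma\setminus\{\emptyset\}$. $\mathbf{F}$ denotes the set of all $\Sigma$-measurable, nonnegative, bounded functions $f\colon X\to[0,\infty)$. A monotone measure is a map $\mu\colon\Sigma\to[0,\infty]$ with $\mu(B)\le\mu(C)$ whenever $B\subseteq C$, $\mu(\emptyset)=0$ and $\mu(X)>0$. For $E\in\Sigma^0$, a conditional aggregation operator (CAO) w.r.t. $E$ is a map $\mathsf{A}(\cdot|E)\colon\mathbf{F}\to[0,\infty]$ such that (C1) $\mathsf{A}(f|E)\le\mathsf{A}(g|E)$ whenever $f(x)\le g(x)$ for all $x\in E$, and (C2) $\mathsf{A}(\mathbf{1}_{X\setminus E}|E)=0$. Here $\mathsf{A}(\cdot|E)$ is a CAO w.r.t. $E$ for each $E\in\Sigma^0$ and $\mathsf{A}(\cdot|\emptyset)=\infty$. The generalized level measure is $\boldsymbol{\mu}_{\mathscr{A}}(f,t)=\sup\{\mu_t(E)\colon \mathsf{A}(f|E)\ge t,\ E\in\Sigma\}$ for $t\ge0$. *)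

theory Defs
  imports "HOL-Analysis.Analysis"
begin

text \<open>Functions are real-valued on type 'a; we take them extensional (zero outside X),
  so that the zero function on X is the constant zero function.\<close>

definition FF :: "'a set \<Rightarrow> 'a set set \<Rightarrow> ('a \<Rightarrow> real) set" where
  "FF X S = {f. f \<in> borel_measurable (measure_of X S (\<lambda>_. 0))
                 \<and> (\<forall>x\<in>X. 0 \<le> f x) \<and> bdd_above (f ` X)
                 \<and> (\<forall>x. x \<notin> X \<longrightarrow> f x = 0)}"

definition monotone_measure :: "'a set \<Rightarrow> 'a set set \<Rightarrow> ('a set \<Rightarrow> ennreal) \<Rightarrow> bool" where
  "monotone_measure X S \<mu> \<longleftrightarrow>
     (\<forall>B\<in>S. \<forall>C\<in>S. B \<subseteq> C \<longrightarrow> \<mu> B \<le> \<mu> C) \<and> \<mu> {} = 0 \<and> \<mu> X > 0"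

definition CAO :: "'a set \<Rightarrow> 'a set set \<Rightarrow> 'a set \<Rightarrow> (('a \<Rightarrow> real) \<Rightarrow> ennreal) \<Rightarrow> bool" where
  "CAO X S E A \<longleftrightarrow>
     (\<forall>f\<in>FF X S. \<forall>g\<in>FF X S. (\<forall>x\<in>E. f x \<le> g x) \<longrightarrow> A f \<le> A g)
     \<and> A (indicator (X - E)) = 0"

definition CAO_family :: "'a set \<Rightarrow> 'a set set \<Rightarrow> ('a set \<Rightarrow> ('a \<Rightarrow> real) \<Rightarrow> ennreal) \<Rightarrow> bool" where
  "CAO_family X S A \<longleftrightarrow>
     (\<forall>E\<in>S. E \<noteq> {} \<longrightarrow> CAO X S E (A E)) \<and> (\<forall>f. A {} f = \<infinity>)"

definition gen_level_measure ::
  "'a set set \<Rightarrow> ('a set \<Rightarrow> ('a \<Rightarrow> real) \<Rightarrow> ennreal) \<Rightarrow> (real \<Rightarrow> 'a set \<Rightarrow> ennreal)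
     \<Rightarrow> ('a \<Rightarrow> real) \<Rightarrow> real \<Rightarrow> ennreal" where
  "gen_level_measure S A \<mu> f t = (SUP E\<in>{E\<in>S. A E f \<ge> ennreal t}. \<mu> t E)"

definition prop_P :: "'a set \<Rightarrow> 'a set set \<Rightarrow> ('a set \<Rightarrow> ('a \<Rightarrow> real) \<Rightarrow> ennreal) \<Rightarrow> bool" where
  "prop_P X S A \<longleftrightarrow>
     (\<forall>\<mu> :: real \<Rightarrow> 'a set \<Rightarrow> ennreal. (\<forall>t\<ge>0. monotone_measure X S (\<mu> t)) \<longrightarrow>
       (\<forall>t>0. \<forall>f\<in>FF X S. f \<noteq> (\<lambda>_. 0) \<longrightarrow>
          gen_level_measure S A \<mu> f t = \<mu> t {x\<in>X. f x \<ge> t}))"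

end

theory Submission
  imports Defs
begin

lemma sets_M:
  assumes "sigma_algebra X S"
  shows "sets (measure_of X S (\<lambda>_. 0)) = S" "space (measure_of X S (\<lambda>_. 0)) = X"
  using assms sigma_algebra.sets_measure_of_eq sigma_algebra.space_measure_of_eq by blast+

lemma FF_level:
  assumes "sigma_algebra X S" "f \<in> FF X S"
  shows "{x\<in>X. t \<le> f x} \<in> S"
proof -
  have "f \<in> borel_measurable (measure_of X S (\<lambda>_. 0))" using assms(2) by (simp add: FF_def)
  hence "{x \<in> space (measure_of X S (\<lambda>_. 0)). t \<le> f x} \<in> sets (measure_of X S (\<lambda>_. 0))"
    by measurable
  thus ?thesis using sets_M[OF assms(1)] by simp
qed

lemma FF_ind:
  assumes "sigma_algebra X S" "B \<in> S" "c \<ge> 0"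
  shows "(\<lambda>x. c * indicator B x) \<in> FF X S"
proof -
  have BX: "B \<subseteq> X" using assms by (meson subset_class.sets_into_space sigma_algebra_def algebra_def ring_of_sets_def semiring_of_sets_def)
  have "indicator B \<in> borel_measurable (measure_of X S (\<lambda>_. 0))"
    by (rule borel_measurable_indicator) (simp add: sets_M[OF assms(1)] assms(2))
  hence m: "(\<lambda>x. c * indicator B x) \<in> borel_measurable (measure_of X S (\<lambda>_. 0))"
    using borel_measurable_times borel_measurable_const by blast
  have "bdd_above ((\<lambda>x. c * indicator B x :: real) ` X)"
    by (rule bdd_aboveI[where M=c]) (auto simp: indicator_def assms)
  thus ?thesis using m BX assms unfolding FF_def by (auto simp: indicator_def)
qed

lemma FF_mult_ind:
  assumes "sigma_algebra X S" "B \<in> S" "f \<in> FF X S"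
  shows "(\<lambda>x. f x * indicator B x) \<in> FF X S"
proof -
  have "indicator B \<in> borel_measurable (measure_of X S (\<lambda>_. 0))"
    by (rule borel_measurable_indicator) (simp add: sets_M[OF assms(1)] assms(2))
  moreover have "f \<in> borel_measurable (measure_of X S (\<lambda>_. 0))" using assms(3) by (simp add: FF_def)
  ultimately have m: "(\<lambda>x. f x * indicator B x) \<in> borel_measurable (measure_of X S (\<lambda>_. 0))"
    using borel_measurable_times by blast
  from assms(3) obtain M where M: "\<forall>x\<in>X. f x \<le> M" unfolding FF_def bdd_above_def by auto
  have "bdd_above ((\<lambda>x. f x * indicator B x :: real) ` X)"
    by (rule bdd_aboveI[where M="max M 0"]) (use M in \<open>auto simp: indicator_def max_def\<close>)
  thus ?thesis using m assms(3) unfolding FF_def by (auto simp: indicator_def)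
qed

lemma INF_ge0:
  assumes "sigma_algebra X S" "f \<in> FF X S" "E \<in> S"
  shows "bdd_below (f ` E)" "E \<subseteq> X"
proof -
  show EX: "E \<subseteq> X" using assms by (meson subset_class.sets_into_space sigma_algebra_def algebra_def ring_of_sets_def semiring_of_sets_def)
  show "bdd_below (f ` E)" by (rule bdd_belowI[where m=0]) (use assms(2) EX in \<open>auto simp: FF_def\<close>)
qed

lemma mm_sub:
  assumes "sigma_algebra X S" "B \<in> S" "B \<noteq> {}"
  shows "monotone_measure X S (\<lambda>C. if B \<subseteq> C then 1 else 0)"
proof -
  have "B \<subseteq> X" using assms by (meson subset_class.sets_into_space sigma_algebra_def algebra_def ring_of_sets_def semiring_of_sets_def)
  thus ?thesis using assms unfolding monotone_measure_def by auto
qed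

lemma upper:
  assumes sa: "sigma_algebra X S" and fam: "CAO_family X S A" and P: "prop_P X S A"
    and g: "g \<in> FF X S" "g \<noteq> (\<lambda>_. 0)" and B: "B \<in> S" "B \<noteq> {}"
  shows "A B g \<le> ennreal (INF x\<in>B. g x)"
proof (rule ccontr)
  define m where "m = (INF x\<in>B. g x)"
  have bdd: "bdd_below (g ` B)" and BX: "B \<subseteq> X" using INF_ge0[OF sa g(1) B(1)] by auto
  have m0: "m \<ge> 0" unfolding m_def using B BX g(1)
    by (intro cINF_greatest) (auto simp: FF_def)
  assume "\<not> A B g \<le> ennreal (INF x\<in>B. g x)"
  hence "ennreal m < A B g" unfolding m_def by simp
  then obtain r where r: "ennreal m < r" "r < A B g" using dense by blast
  have rfin: "r \<noteq> \<infinity>" using r(2) by auto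
  define t where "t = enn2real r"
  have rt: "r = ennreal t" unfolding t_def using rfin by (cases r) auto
  have tm: "m < t" using r(1) rt m0 by (simp add: ennreal_less_iff)
  have t0: "t > 0" using tm m0 by simp
  define \<mu> where "\<mu> = (\<lambda>(_::real) C. if B \<subseteq> C then (1::ennreal) else 0)"
  have mm: "\<forall>t\<ge>0. monotone_measure X S (\<mu> t)" unfolding \<mu>_def using mm_sub[OF sa B] by simp
  have eq: "gen_level_measure S A \<mu> g t = \<mu> t {x\<in>X. g x \<ge> t}"
    using P mm t0 g unfolding prop_P_def by blast
  have "B \<in> {E\<in>S. A E g \<ge> ennreal t}" using B r rt by auto
  hence "\<mu> t B \<le> gen_level_measure S A \<mu> g t" unfolding gen_level_measure_def
    by (rule SUP_upper)
  hence "B \<subseteq> {x\<in>X. g x \<ge> t}" using eq unfolding \<mu>_def by (cases "B \<subseteq> {x\<in>X. g x \<ge> t}") auto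
  hence "t \<le> m" unfolding m_def using B by (intro cINF_greatest) auto
  thus False using tm by simp
qed

lemma main:
  assumes sa: "sigma_algebra X S" and X: "X \<noteq> {}" and fam: "CAO_family X S A"
  shows "prop_P X S A \<longleftrightarrow> (\<forall>f\<in>FF X S. \<forall>E\<in>S. E \<noteq> {} \<longrightarrow> A E f = ennreal (INF x\<in>E. f x))"
proof
  assume P: "prop_P X S A"
  show "\<forall>f\<in>FF X S. \<forall>E\<in>S. E \<noteq> {} \<longrightarrow> A E f = ennreal (INF x\<in>E. f x)"
  proof (intro ballI impI)
    fix f E assume f: "f \<in> FF X S" and E: "E \<in> S" "E \<noteq> {}"
    have cao: "CAO X S E (A E)" using fam E unfolding CAO_family_def by blast
    have bdd: "bdd_below (f ` E)" and EX: "E \<subseteq> X" using INF_ge0[OF sa f E(1)] by auto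
    define c where "c = (INF x\<in>E. f x)"
    have c0: "c \<ge> 0" unfolding c_def using E EX f
      by (intro cINF_greatest) (auto simp: FF_def)
    have cle: "\<And>x. x \<in> E \<Longrightarrow> c \<le> f x" unfolding c_def using bdd by (intro cINF_lower) auto
    have XE: "X - E \<in> S" proof -
      interpret sigma_algebra X S by (rule sa)
      show ?thesis using E by auto
    qed
    show "A E f = ennreal c"
    proof (cases "f = (\<lambda>_. 0)")
      case True
      have ind: "indicator (X - E) \<in> FF X S" using FF_ind[OF sa XE, of 1] by simp
      have mono: "\<forall>f\<in>FF X S. \<forall>g\<in>FF X S. (\<forall>x\<in>E. f x \<le> g x) \<longrightarrow> A E f \<le> A E g"
        using cao unfolding CAO_def by blast
      have "\<forall>x\<in>E. f x \<le> indicator (X - E) x" using True by simp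
      hence "A E f \<le> A E (indicator (X - E))" using mono f ind by blast
      hence "A E f = 0" using cao unfolding CAO_def by simp
      moreover have "c = 0" unfolding c_def True using E by simp
      ultimately show ?thesis by simp
    next
      case False
      have up: "A E f \<le> ennreal c" unfolding c_def by (rule upper[OF sa fam P f False E])
      have "ennreal c \<le> A E f"
      proof (cases "c = 0")
        case True thus ?thesis by simp
      next
        case False
        hence cpos: "c > 0" using c0 by simp
        define g where "g = (\<lambda>x. f x * indicator E x)"
        have gF: "g \<in> FF X S" unfolding g_def by (rule FF_mult_ind[OF sa E(1) f])
        have gE: "\<And>x. x \<in> E \<Longrightarrow> g x = f x" unfolding g_def by simp
        have Agf: "A E g = A E f" using cao gF f gE unfolding CAO_def by (metis order.eq_iff order_refl)
        obtain x0 where x0: "x0 \<in> E" using E by auto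
        have gnz: "g \<noteq> (\<lambda>_. 0)"
        proof
          assume "g = (\<lambda>_. 0)" hence "g x0 = 0" by simp
          thus False using gE[OF x0] cle[OF x0] cpos by simp
        qed
        define \<mu> where "\<mu> = (\<lambda>(_::real) C. if E \<subseteq> C then (1::ennreal) else 0)"
        have mm: "\<forall>t\<ge>0. monotone_measure X S (\<mu> t)" unfolding \<mu>_def using mm_sub[OF sa E] by simp
        have eq: "gen_level_measure S A \<mu> g c = \<mu> c {x\<in>X. g x \<ge> c}"
          using P mm cpos gF gnz unfolding prop_P_def by blast
        have "E \<subseteq> {x\<in>X. g x \<ge> c}" using EX gE cle by auto
        hence "gen_level_measure S A \<mu> g c = 1" using eq by (simp add: \<mu>_def)
        hence "0 < (SUP B\<in>{B\<in>S. A B g \<ge> ennreal c}. \<mu> c B)" unfolding gen_level_measure_def by simp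
        then obtain B where B: "B \<in> S" "A B g \<ge> ennreal c" "0 < \<mu> c B" by (auto simp: less_SUP_iff)
        have EB: "E \<subseteq> B" using B(3) by (auto simp: \<mu>_def split: if_splits)
        have BX: "B \<subseteq> X" using INF_ge0[OF sa gF B(1)] by auto
        have "B = E"
        proof (rule ccontr)
          assume "B \<noteq> E"
          then obtain y where y: "y \<in> B" "y \<notin> E" using EB by auto
          have Bne: "B \<noteq> {}" using y by auto
          have ub: "A B g \<le> ennreal (INF x\<in>B. g x)" by (rule upper[OF sa fam P gF gnz B(1) Bne])
          have "(INF x\<in>B. g x) \<le> g y" using INF_ge0[OF sa gF B(1)] y by (intro cINF_lower) auto
          moreover have "g y = 0" using y unfolding g_def by simp
          ultimately have "ennreal (INF x\<in>B. g x) = 0" by (simp add: ennreal_eq_0_iff)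
          hence "A B g = 0" using ub by simp
          thus False using B(2) cpos by simp
        qed
        thus ?thesis using B(2) Agf by simp
      qed
      thus ?thesis using up by simp
    qed
  qed
next
  assume H: "\<forall>f\<in>FF X S. \<forall>E\<in>S. E \<noteq> {} \<longrightarrow> A E f = ennreal (INF x\<in>E. f x)"
  show "prop_P X S A" unfolding prop_P_def
  proof (intro allI impI ballI)
    fix \<mu> :: "real \<Rightarrow> 'a set \<Rightarrow> ennreal" and t :: real and f
    assume mm: "\<forall>t\<ge>0. monotone_measure X S (\<mu> t)" and t: "t > 0" and f: "f \<in> FF X S"
    have m: "monotone_measure X S (\<mu> t)" using mm t by simp
    define L where "L = {x\<in>X. t \<le> f x}"
    have LS: "L \<in> S" unfolding L_def by (rule FF_level[OF sa f])
    have le: "(SUP E\<in>{E\<in>S. A E f \<ge> ennreal t}. \<mu> t E) \<le> \<mu> t L"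
    proof (rule SUP_least)
      fix E assume E: "E \<in> {E\<in>S. A E f \<ge> ennreal t}"
      show "\<mu> t E \<le> \<mu> t L"
      proof (cases "E = {}")
        case True thus ?thesis using m unfolding monotone_measure_def by simp
      next
        case False
        have bdd: "bdd_below (f ` E)" and EX: "E \<subseteq> X" using INF_ge0[OF sa f] E by auto
        have "ennreal t \<le> ennreal (INF x\<in>E. f x)" using E H f False by (metis (no_types, lifting) mem_Collect_eq)
        hence ti: "t \<le> (INF x\<in>E. f x)" using t by (simp add: ennreal_le_iff2)
        have "E \<subseteq> L" unfolding L_def using EX
        proof (auto)
          fix x assume "x \<in> E"
          hence "(INF x\<in>E. f x) \<le> f x" using bdd by (intro cINF_lower) auto
          thus "t \<le> f x" using ti by simp
        qed
        thus ?thesis using m E LS unfolding monotone_measure_def by auto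
      qed
    qed
    have ge: "\<mu> t L \<le> (SUP E\<in>{E\<in>S. A E f \<ge> ennreal t}. \<mu> t E)"
    proof (cases "L = {}")
      case True thus ?thesis using m unfolding monotone_measure_def by simp
    next
      case False
      have "t \<le> (INF x\<in>L. f x)" using False by (intro cINF_greatest) (auto simp: L_def)
      hence "ennreal t \<le> A L f" using H f LS False by (simp add: ennreal_leI)
      hence "L \<in> {E\<in>S. A E f \<ge> ennreal t}" using LS by simp
      thus ?thesis by (rule SUP_upper)
    qed
    show "gen_level_measure S A \<mu> f t = \<mu> t {x\<in>X. f x \<ge> t}"
      unfolding gen_level_measure_def using le ge L_def by (simp add: antisym)
  qed
qed

lemma FF_level_le:
  assumes "sigma_algebra X S" "f \<in> FF X S"
  shows "{x\<in>X. f x \<le> t} \<in> S"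
proof -
  have "f \<in> borel_measurable (measure_of X S (\<lambda>_. 0))" using assms(2) by (simp add: FF_def)
  hence "{x \<in> space (measure_of X S (\<lambda>_. 0)). f x \<le> t} \<in> sets (measure_of X S (\<lambda>_. 0))"
    by measurable
  thus ?thesis using sets_M[OF assms(1)] by simp
qed

lemma FF_const:
  assumes sa: "sigma_algebra X S" and S: "S = {{}, X}" and f: "f \<in> FF X S" and x0: "x0 \<in> X"
  shows "f = (\<lambda>x. f x0 * indicator X x)"
proof
  fix x
  show "f x = f x0 * indicator X x"
  proof (cases "x \<in> X")
    case True
    have "{y\<in>X. f x0 \<le> f y} \<in> S" using FF_level[OF sa f] by blast
    hence a: "{y\<in>X. f x0 \<le> f y} = X" using S x0 by auto
    have "{y\<in>X. f y \<le> f x0} \<in> S" by (rule FF_level_le[OF sa f])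
    hence b: "{y\<in>X. f y \<le> f x0} = X" using S x0 by auto
    have "f x0 \<le> f x" using a True by blast
    moreover have "f x \<le> f x0" using b True by blast
    ultimately show ?thesis using True by simp
  next
    case False thus ?thesis using f by (simp add: FF_def)
  qed
qed

theorem theorem3p18:
  fixes X :: "'a set" and S :: "'a set set"
    and A :: "'a set \<Rightarrow> ('a \<Rightarrow> real) \<Rightarrow> ennreal"
  assumes "sigma_algebra X S"
    and "X \<noteq> {}"
    and "CAO_family X S A"
  shows "(S = {{}, X} \<longrightarrow>
            (prop_P X S A \<longleftrightarrow> (\<forall>b::real>0. A X (\<lambda>x. b * indicator X x) = ennreal b)))
       \<and> (S \<noteq> {{}, X} \<longrightarrow>
            (prop_P X S A \<longleftrightarrow>
              (\<forall>f\<in>FF X S. \<forall>E\<in>S. E \<noteq> {} \<longrightarrow> A E f = ennreal (INF x\<in>E. f x))))"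
proof -
  note M = main[OF assms]
  have a: "(\<forall>f\<in>FF X S. \<forall>E\<in>S. E \<noteq> {} \<longrightarrow> A E f = ennreal (INF x\<in>E. f x))
     \<longleftrightarrow> (\<forall>b::real>0. A X (\<lambda>x. b * indicator X x) = ennreal b)" if S: "S = {{}, X}"
  proof
    assume H: "\<forall>f\<in>FF X S. \<forall>E\<in>S. E \<noteq> {} \<longrightarrow> A E f = ennreal (INF x\<in>E. f x)"
    show "\<forall>b::real>0. A X (\<lambda>x. b * indicator X x) = ennreal b"
    proof (intro allI impI)
      fix b :: real assume b: "b > 0"
      have "(\<lambda>x. b * indicator X x) \<in> FF X S" using FF_ind[OF assms(1), of X b] S b by simp
      hence "A X (\<lambda>x. b * indicator X x) = ennreal (INF x\<in>X. b * indicator X x)"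
        using H S assms(2) by blast
      also have "(INF x\<in>X. b * indicator X x) = (INF x\<in>X. b)"
        by (rule INF_cong) (auto simp: indicator_def)
      also have "\<dots> = b" using assms(2) by simp
      finally show "A X (\<lambda>x. b * indicator X x) = ennreal b" .
    qed
  next
    assume H: "\<forall>b::real>0. A X (\<lambda>x. b * indicator X x) = ennreal b"
    show "\<forall>f\<in>FF X S. \<forall>E\<in>S. E \<noteq> {} \<longrightarrow> A E f = ennreal (INF x\<in>E. f x)"
    proof (intro ballI impI)
      fix f E assume f: "f \<in> FF X S" and E: "E \<in> S" "E \<noteq> {}"
      hence EX: "E = X" using S by auto
      obtain x0 where x0: "x0 \<in> X" using assms(2) by auto
      define c where "c = f x0"
      have fc: "f = (\<lambda>x. c * indicator X x)" unfolding c_def by (rule FF_const[OF assms(1) S f x0])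
      have c0: "c \<ge> 0" using f x0 unfolding c_def FF_def by auto
      have inf: "(INF x\<in>E. f x) = c" unfolding EX fc
        using assms(2) by (simp add: indicator_def)
      show "A E f = ennreal (INF x\<in>E. f x)"
      proof (cases "c = 0")
        case True
        have "CAO X S X (A X)" using assms(3) S assms(2) unfolding CAO_family_def by auto
        hence "A X (indicator (X - X)) = 0" unfolding CAO_def by blast
        moreover have "f = indicator (X - X)" using fc True by (auto simp: indicator_def)
        ultimately show ?thesis using inf True EX by simp
      next
        case False
        have "A X (\<lambda>x. c * indicator X x) = ennreal c" using H c0 False by simp
        thus ?thesis using fc inf EX by simp
      qed
    qed
  qed
  show ?thesis using M a by blast
qed

end
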